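(* Let $k\in\mathbb{N}$, $j\in\mathbb{N}$ with $j\ge k+1$, and $0<\theta\le\pi$. Write $\sigma=\sin\frac{\theta}{2}$ and $L=\ln\sigma$. Then \[ \begin{aligned} \mathrm{Ls}_j^{(k)}(\theta) &=(\ln2)^{j}\left(\frac{2\sigma}{\ln2}\right)^{k+1}\Biggl[k!\sum_{q=1}^{\infty}\frac{(-1)^{q+1}}{(k+2q)!}(2\sigma)^{2q}Q(k+1,2q;2) \sum_{\ell=0}^{j-k-1}\binom{j-k-1}{\ell}\frac{1}{(\ln 2)^{\ell}}\sum_{p=0}^{\ell}\frac{(-1)^p\langle\ell\rangle_{p}\,L^{\ell-p}}{(k+2q+1)^{p+1}}\\ &\qquad-\sum_{\ell=0}^{j-k-1}\binom{j-k-1}{\ell}\frac{1}{(\ln 2)^{\ell}}\sum_{p=0}^{\ell}\frac{(-1)^p\langle\ell\rangle_{p}\,L^{\ell-p}}{(k+1)^{p+1}}\Biggr], \end{aligned} \] with the convention $0^0=1$ (relevant when $\theta=\pi$, $L=0$).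
   Context: The generalized logsine function is $\mathrm{Ls}_j^{(k)}(\theta)=-\int_{0}^{\theta}x^k\left(\ln\left|2\sin\frac{x}{2}\right|\right)^{j-k-1}dx$ for integers $j\ge k+1\ge1$ and real $\theta$. The falling factorial is $\langle z\rangle_p=z(z-1)\cdots(z-p+1)$ for $p\in\mathbb{N}$, $\langle z\rangle_0=1$. $s(n,k)$ denotes the signed Stirling numbers of the first kind, defined by $\frac{[\ln(1+x)]^k}{k!}=\sum_{n=k}^\infty s(n,k)\frac{x^n}{n!}$ for $|x|<1$; equivalently $\prod_{j=0}^{n-1}(z-j)=\sum_{k=0}^n s(n,k)z^k$. For $m\in\mathbb{N}$, $k\in\mathbb{N}_0$ and $\alpha\in\mathbb{R}$ define \[ Q(m,k;\alpha)=\sum_{\ell=0}^{k}\binom{m+\ell-1}{m-1}\, s(m+k-1,m+\ell-1)\left(\frac{m+k-\alpha}{2}\right)^{\ell}, \] with the convention $0^0=1$. *)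

theory Defs
  imports "HOL-Analysis.Analysis" "HOL-Combinatorics.Stirling"
begin

definition Ls :: "nat \<Rightarrow> nat \<Rightarrow> real \<Rightarrow> real" where
  "Ls j k \<theta> = - (LBINT x=0..\<theta>. x ^ k * (ln \<bar>2 * sin (x / 2)\<bar>) ^ (j - k - 1))"

definition falling_fact :: "real \<Rightarrow> nat \<Rightarrow> real" where
  "falling_fact z p = (\<Prod>i<p. (z - real i))"

text \<open>Signed Stirling numbers of the first kind (library: unsigned stirling).\<close>
definition stirling1s :: "nat \<Rightarrow> nat \<Rightarrow> real" where
  "stirling1s n k = (-1) ^ (n - k) * real (stirling n k)"

definition Q :: "nat \<Rightarrow> nat \<Rightarrow> real \<Rightarrow> real" where
  "Q m k \<alpha> = (\<Sum>l=0..k. real ((m + l - 1) choose (m - 1)) * stirling1s (m + k - 1) (m + l - 1)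
      * ((real (m + k) - \<alpha>) / 2) ^ l)"

end

theory Submission
  imports Defs "HOL-Computational_Algebra.Polynomial"
begin


fun Pt :: "nat \<Rightarrow> real poly" where
  "Pt 0 = 1"
| "Pt (Suc 0) = [:0,1:]"
| "Pt (Suc (Suc n)) = [:(real n)^2, 0, 1:] * Pt n"

lemma coeff_quad_mult:
  fixes c :: real shows "coeff ([:c, 0, 1:] * p) m = c * coeff p m + (if 2 \<le> m then coeff p (m - 2) else 0)"
proof -
  have "[:c, 0, 1:] * p = smult c p + pCons 0 (pCons 0 p)"
    by (simp add: smult_one)
  then show ?thesis by (cases m; cases "m - 1") (auto simp: coeff_pCons numeral_2_eq_2)
qed

lemma Pt_rec: "coeff (Pt (Suc (Suc n))) m = (real n)^2 * coeff (Pt n) m + (if 2 \<le> m then coeff (Pt n) (m - 2) else 0)"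
  unfolding Pt.simps by (rule coeff_quad_mult)

lemma Pt_nonneg: "coeff (Pt n) m \<ge> 0"
proof (induction n arbitrary: m rule: Pt.induct)
  case 1 then show ?case by (simp add: coeff_1)
next
  case 2 then show ?case by (cases m) (auto simp: coeff_pCons split: nat.splits)
next
  case (3 n) then show ?case unfolding Pt_rec by (simp add: add_nonneg_nonneg)
qed

lemma Pt_le_fact: "coeff (Pt n) m \<le> fact n"
proof (induction n arbitrary: m rule: Pt.induct)
  case 1 then show ?case by (simp add: coeff_1)
next
  case 2 then show ?case by (cases m) (auto simp: coeff_pCons split: nat.splits)
next
  case (3 n)
  have a: "coeff (Pt n) m \<le> fact n" "(if 2 \<le> m then coeff (Pt n) (m - 2) else 0) \<le> fact n"
    using 3 by auto
  have "coeff (Pt (Suc (Suc n))) m \<le> (real n)^2 * fact n + fact n"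
    unfolding Pt_rec by (intro add_mono mult_left_mono a) auto
  also have "\<dots> = ((real n)^2 + 1) * fact n" by (simp add: algebra_simps)
  also have "\<dots> \<le> (real n + 2) * (real n + 1) * fact n"
    by (intro mult_right_mono) (auto simp: power2_eq_square algebra_simps)
  also have "\<dots> = fact (Suc (Suc n))" by (simp add: algebra_simps)
  finally show ?case .
qed

lemma Pt_zero: "odd (n + m) \<or> n < m \<Longrightarrow> coeff (Pt n) m = 0"
proof (induction n arbitrary: m rule: Pt.induct)
  case 1 then show ?case by (cases m) (auto simp: coeff_1)
next
  case 2 then show ?case by (cases m; cases "m - 1") (auto simp: coeff_pCons split: nat.splits)
next
  case (3 n)
  have "coeff (Pt n) m = 0" using 3 by auto
  moreover have "coeff (Pt n) (m - 2) = 0" if m2: "2 \<le> m"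
  proof -
    obtain m' where m': "m = m' + 2" using m2 by (metis le_add_diff_inverse2)
    have "odd (n + m') \<or> n < m'" using 3(2) unfolding m' by auto
    then show ?thesis using 3(1)[of m'] m' by simp
  qed
  ultimately show ?case unfolding Pt_rec by auto
qed

lemma Pt_const: "coeff (Pt (Suc n)) 0 = 0"
proof (induction n rule: nat_less_induct)
  case (1 n)
  show ?case
  proof (cases n)
    case 0 then show ?thesis by simp
  next
    case (Suc n1)
    then show ?thesis
    proof (cases n1)
      case 0 then show ?thesis using Suc by (simp add: coeff_quad_mult)
    next
      case (Suc n2)
      then have "coeff (Pt (Suc n)) 0 = (real (Suc n2))^2 * coeff (Pt (Suc n2)) 0"
        using \<open>n = Suc n1\<close> Pt_rec[of "Suc n2" 0] by simp
      then show ?thesis using 1 Suc \<open>n = Suc n1\<close> by simp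
    qed
  qed
qed

definition Rp :: "nat \<Rightarrow> real poly" where
  "Rp N = (\<Prod>i<N. [:(real N - 1) / 2 - real i, 1:])"

lemma Rp_rec: "Rp (Suc (Suc N)) = [:- ((real N + 1)^2 / 4), 0, 1:] * Rp N"
proof -
  have "Rp (Suc (Suc N)) = [:(real N + 1) / 2, 1:] * (\<Prod>i<Suc N. [:(real N + 1) / 2 - real (Suc i), 1:])"
    unfolding Rp_def by (subst prod.lessThan_Suc_shift) (simp add: algebra_simps)
  also have "(\<Prod>i<Suc N. [:(real N + 1) / 2 - real (Suc i), 1:]) =
      (\<Prod>i<N. [:(real N + 1) / 2 - real (Suc i), 1:]) * [:(real N + 1) / 2 - real (Suc N), 1:]"
    by simp
  also have "(\<Prod>i<N. [:(real N + 1) / 2 - real (Suc i), 1:]) = Rp N"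
    unfolding Rp_def by (intro prod.cong) (auto simp: field_simps)
  finally have "Rp (Suc (Suc N)) = ([:(real N + 1) / 2, 1:] * [:(real N + 1) / 2 - real (Suc N), 1:]) * Rp N"
    by (metis mult.assoc mult.commute)
  also have "[:(real N + 1) / 2, 1:] * [:(real N + 1) / 2 - real (Suc N), 1:] = [:- ((real N + 1)^2 / 4), 0, 1:]"
    by (simp add: field_simps power2_eq_square)
  finally show ?thesis .
qed

lemma degree_Rp: "degree (Rp N) \<le> N"
proof -
  have "degree (Rp N) \<le> sum (degree \<circ> (\<lambda>i. [:(real N - 1) / 2 - real i, 1:])) {..<N}"
    unfolding Rp_def by (rule degree_prod_sum_le) auto
  also have "\<dots> = N" by simp
  finally show ?thesis .
qed

lemma Pt_Rp: "coeff (Pt (Suc N)) (Suc k) = (-4) ^ ((N - k) div 2) * coeff (Rp N) k"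
proof (induction N arbitrary: k rule: nat_less_induct)
  case (1 N)
  show ?case
  proof (cases N)
    case 0
    then show ?thesis by (cases k) (auto simp: Rp_def coeff_1)
  next
    case (Suc N1)
    show ?thesis
    proof (cases N1)
      case 0
      then show ?thesis using Suc
        by (cases k; cases "k - 1") (auto simp: Rp_def coeff_pCons numeral_2_eq_2 split: nat.splits)
    next
      case (Suc M)
      have N: "N = Suc (Suc M)" using Suc \<open>N = Suc N1\<close> by simp
      have IH: "\<And>k. coeff (Pt (Suc M)) (Suc k) = (-4) ^ ((M - k) div 2) * coeff (Rp M) k"
        using 1 N by auto
      have P: "coeff (Pt (Suc N)) (Suc k) = (real (Suc M))^2 * coeff (Pt (Suc M)) (Suc k)
           + (if 2 \<le> Suc k then coeff (Pt (Suc M)) (Suc k - 2) else 0)"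
        using Pt_rec[of "Suc M" "Suc k"] N by simp
      have R: "coeff (Rp N) k = - ((real M + 1)^2 / 4) * coeff (Rp M) k + (if 2 \<le> k then coeff (Rp M) (k - 2) else 0)"
        unfolding N Rp_rec coeff_quad_mult by simp
      show ?thesis
      proof (cases "k \<le> M")
        case True
        have e: "(N - k) div 2 = Suc ((M - k) div 2)" using True N by presburger
        show ?thesis
        proof (cases "2 \<le> k")
          case True
          have e2: "(M - (k - 2)) div 2 = Suc ((M - k) div 2)" using True \<open>k \<le> M\<close> by presburger
          obtain k' where k': "k = k' + 2" using True by (metis le_add_diff_inverse2)
          have "coeff (Pt (Suc M)) (Suc k - 2) = (-4) ^ Suc ((M - k) div 2) * coeff (Rp M) (k - 2)"
            using IH[of k'] e2 unfolding k' by simp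
          then show ?thesis using True unfolding P R e IH by (simp add: algebra_simps)
        next
          case False
          have "k = 0 \<or> k = 1" using False by auto
          moreover have "coeff (Pt (Suc M)) 0 = 0" by (rule Pt_const)
          ultimately show ?thesis using False unfolding P R e IH by (auto simp: algebra_simps)
        qed
      next
        case False
        have z: "coeff (Rp M) k = 0" "coeff (Pt (Suc M)) (Suc k) = 0"
          using False degree_Rp[of M] by (auto intro!: coeff_eq_0 Pt_zero)
        show ?thesis
        proof (cases "k = Suc M")
          case True
          then show ?thesis using z unfolding P R using N IH[of "M - 1"]
            by (cases M) (auto simp: Pt_zero numeral_2_eq_2)
        next
          case False
          show ?thesis
          proof (cases "k = N")
            case True
            have "(N - k) div 2 = 0" "(M - (k-2)) div 2 = 0" using True N by auto
            then show ?thesis using z True N unfolding P R using IH[of "k - 2"] by (simp add: numeral_2_eq_2)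
          next
            case False
            have kN: "N < k" using \<open>\<not> k \<le> M\<close> \<open>k \<noteq> Suc M\<close> False N by auto
            have "coeff (Pt (Suc N)) (Suc k) = 0" using kN by (intro Pt_zero) auto
            moreover have "coeff (Rp N) k = 0" using kN degree_Rp[of N] by (intro coeff_eq_0) auto
            ultimately show ?thesis by simp
          qed
        qed
      qed
    qed
  qed
qed




lemma falling_prod_stirling:
  fixes z :: real
  shows "(\<Prod>i<N. z - real i) = (\<Sum>i\<le>N. stirling1s N i * z ^ i)"
proof -
  have "pochhammer (-z) N = (\<Prod>i<N. - z + real i)"
    by (simp add: pochhammer_prod atLeast0LessThan)
  also have "\<dots> = (\<Prod>i<N. (-1) * (z - real i))" by (intro prod.cong) auto
  also have "\<dots> = (-1) ^ N * (\<Prod>i<N. z - real i)" by (simp only: prod.distrib prod_constant card_lessThan)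
  finally have 1: "(\<Prod>i<N. z - real i) = (-1) ^ N * pochhammer (-z) N"
    by simp
  also have "\<dots> = (-1) ^ N * (\<Sum>i\<le>N. real (stirling N i) * (-z) ^ i)"
    by (simp add: stirling_pochhammer)
  also have "\<dots> = (\<Sum>i\<le>N. stirling1s N i * z ^ i)"
    unfolding sum_distrib_left stirling1s_def
  proof (intro sum.cong refl)
    fix i assume "i \<in> {..N}"
    then have "(-1::real) ^ N = (-1) ^ (N - i) * (-1) ^ i"
      by (simp add: power_add[symmetric])
    then show "(-1) ^ N * (real (stirling N i) * (- z) ^ i) = (-1) ^ (N - i) * real (stirling N i) * z ^ i"
      by (simp add: power_minus[of z] algebra_simps)
  qed
  finally show ?thesis .
qed

lemma coeff_lin_power: "coeff ([:a, 1:] ^ i) k = real (i choose k) * (a::real) ^ (i - k)"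
proof (induction i arbitrary: k)
  case 0 then show ?case by (cases k) (auto simp: coeff_1)
next
  case (Suc i)
  have "[:a, 1:] ^ Suc i = smult a ([:a,1:]^i) + pCons 0 ([:a,1:]^i)" by simp
  then have e: "coeff ([:a, 1:] ^ Suc i) k = a * coeff ([:a,1:]^i) k + (if k = 0 then 0 else coeff ([:a,1:]^i) (k - 1))"
    by (cases k) (auto simp: coeff_pCons)
  show ?case
  proof (cases k)
    case 0 then show ?thesis unfolding e Suc by simp
  next
    case (Suc k1)
    show ?thesis
    proof (cases "k1 < i")
      case True
      then have "a * (real (i choose Suc k1) * a ^ (i - Suc k1)) = real (i choose Suc k1) * a ^ (i - k1)"
        by (metis Suc_diff_Suc mult.left_commute power_Suc)
      then show ?thesis unfolding e Suc.IH using Suc by (simp add: algebra_simps)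
    next
      case False
      then show ?thesis unfolding e Suc.IH using Suc by (cases "k1 = i") auto
    qed
  qed
qed

lemma Rp_stirling: "Rp N = (\<Sum>i\<le>N. smult (stirling1s N i) ([:(real N - 1)/2, 1:] ^ i))"
proof -
  have "poly (Rp N) h = poly (\<Sum>i\<le>N. smult (stirling1s N i) ([:(real N - 1)/2, 1:] ^ i)) h" for h
  proof -
    have "poly (Rp N) h = (\<Prod>i<N. (h + (real N - 1)/2) - real i)"
      unfolding Rp_def poly_prod by (intro prod.cong) auto
    also have "\<dots> = (\<Sum>i\<le>N. stirling1s N i * (h + (real N - 1)/2) ^ i)"
      by (rule falling_prod_stirling)
    finally show ?thesis by (simp add: poly_sum algebra_simps)
  qed
  then show ?thesis by (intro poly_eq_poly_eq_iff[THEN iffD1]) auto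
qed

lemma coeff_Rp: "coeff (Rp N) k = (\<Sum>l=0..N-k. real ((k + l) choose k) * stirling1s N (k + l) * ((real N - 1)/2) ^ l)"
proof (cases "k \<le> N")
  case True
  have "coeff (Rp N) k = (\<Sum>i\<le>N. stirling1s N i * (real (i choose k) * ((real N - 1)/2) ^ (i - k)))"
    unfolding Rp_stirling coeff_sum coeff_smult coeff_lin_power ..
  also have "\<dots> = (\<Sum>i\<in>{k..N}. stirling1s N i * (real (i choose k) * ((real N - 1)/2) ^ (i - k)))"
    by (intro sum.mono_neutral_right) auto
  also have "\<dots> = (\<Sum>l=0..N-k. real ((k + l) choose k) * stirling1s N (k + l) * ((real N - 1)/2) ^ l)"
    using True
    by (intro sum.reindex_bij_witness[of _ "\<lambda>l. l + k" "\<lambda>i. i - k"]) (auto simp: algebra_simps)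
  finally show ?thesis .
next
  case False
  then show ?thesis using degree_Rp[of N] by (auto intro!: coeff_eq_0 simp: stirling1s_def)
qed

lemma Q_Rp: "Q (k + 1) (2 * q) 2 = coeff (Rp (k + 2 * q)) k"
  unfolding Q_def coeff_Rp
  by (intro sum.cong) (auto simp: algebra_simps)

lemma Pt_Q: "coeff (Pt (Suc (k + 2 * q))) (Suc k) = (-4) ^ q * Q (k + 1) (2 * q) 2"
  unfolding Q_Rp Pt_Rp by simp




definition a :: "nat \<Rightarrow> nat \<Rightarrow> real" where
  "a m n = fact m * coeff (Pt n) m / fact n"

lemma a_nonneg: "a m n \<ge> 0"
  unfolding a_def using Pt_nonneg by simp

lemma a_le: "a m n \<le> fact m"
proof -
  have "coeff (Pt n) m / fact n \<le> 1" using Pt_le_fact[of n m] by simp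
  then show ?thesis unfolding a_def using mult_left_mono[of "coeff (Pt n) m / fact n" 1 "fact m"]
    by simp
qed

lemma a_rec: "diffs (diffs (a m)) n - (real n)^2 * a m n = real m * (real m - 1) * a (m - 2) n"
proof -
  have d: "diffs (diffs (a m)) n = real (Suc n) * real (Suc (Suc n)) * a m (Suc (Suc n))"
    by (simp add: diffs_def)
  have f: "fact (Suc (Suc n)) = (real (Suc n) * real (Suc (Suc n))) * (fact n :: real)"
    by (simp add: algebra_simps)
  have "diffs (diffs (a m)) n = fact m * coeff (Pt (Suc (Suc n))) m / fact n"
  proof -
    have g: "(real (Suc n) * real (Suc (Suc n))) * (c / ((real (Suc n) * real (Suc (Suc n))) * fact n)) = c / fact n"
      for c :: real
    proof -
      have aux: "x \<noteq> 0 \<Longrightarrow> (x::real) * (c / (x * F)) = c / F" for x F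
        by (cases "F = 0") (simp_all add: field_simps)
      show ?thesis by (rule aux) (simp del: of_nat_Suc)
    qed
    show ?thesis unfolding d a_def f using g[of "fact m * coeff (Pt (Suc (Suc n))) m"]
      by (simp only: times_divide_eq_right[symmetric] mult.assoc)
  qed
  also have "\<dots> = (real n)^2 * a m n + fact m * (if 2 \<le> m then coeff (Pt n) (m - 2) else 0) / fact n"
    unfolding Pt_rec a_def by (simp add: field_simps del: Pt.simps)
  also have "fact m * (if 2 \<le> m then coeff (Pt n) (m - 2) else 0) / fact n = real m * (real m - 1) * a (m - 2) n"
  proof (cases "2 \<le> m")
    case True
    then obtain m' where m': "m = m' + 2" by (metis le_add_diff_inverse2)
    have "(fact m :: real) = real m * (real m - 1) * fact (m - 2)"
      unfolding m' by (simp add: algebra_simps)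
    then show ?thesis using True unfolding a_def by simp
  next
    case False
    then have "m = 0 \<or> m = 1" by auto
    then show ?thesis using False by auto
  qed
  finally show ?thesis by simp
qed

lemma summable_a: "\<bar>y\<bar> < 1 \<Longrightarrow> summable (\<lambda>n. a m n * y ^ n)"
proof (rule summable_comparison_test)
  assume y: "\<bar>y\<bar> < 1"
  show "\<exists>N. \<forall>n\<ge>N. norm (a m n * y ^ n) \<le> fact m * \<bar>y\<bar> ^ n"
    using a_le a_nonneg by (auto simp: abs_mult power_abs intro!: mult_right_mono)
  show "summable (\<lambda>n. fact m * \<bar>y\<bar> ^ n)"
    using y by (intro summable_mult summable_geometric) auto
qed

lemma summable_a1: "\<bar>y\<bar> < 1 \<Longrightarrow> summable (\<lambda>n. diffs (a m) n * y ^ n)"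
  by (rule termdiff_converges[where K=1]) (auto intro: summable_a)

lemma summable_a2: "\<bar>y\<bar> < 1 \<Longrightarrow> summable (\<lambda>n. diffs (diffs (a m)) n * y ^ n)"
  by (rule termdiff_converges[where K=1]) (auto intro: summable_a1)

definition H :: "nat \<Rightarrow> real \<Rightarrow> real" where "H m y = (\<Sum>n. a m n * y ^ n)"
definition H1 :: "nat \<Rightarrow> real \<Rightarrow> real" where "H1 m y = (\<Sum>n. diffs (a m) n * y ^ n)"
definition H2 :: "nat \<Rightarrow> real \<Rightarrow> real" where "H2 m y = (\<Sum>n. diffs (diffs (a m)) n * y ^ n)"

lemma H_deriv: "\<bar>y\<bar> < 1 \<Longrightarrow> (H m has_field_derivative H1 m y) (at y)"
  unfolding H_def[abs_def] H1_def
  by (rule termdiffs_strong'[where K=1]) (auto intro: summable_a)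

lemma H1_deriv: "\<bar>y\<bar> < 1 \<Longrightarrow> (H1 m has_field_derivative H2 m y) (at y)"
  unfolding H1_def[abs_def] H2_def
  by (rule termdiffs_strong'[where K=1]) (auto intro: summable_a1)

lemma H_ode:
  assumes y: "\<bar>y\<bar> < 1"
  shows "(1 - y^2) * H2 m y - y * H1 m y = real m * (real m - 1) * H (m - 2) y"
proof -
  let ?c = "a m"
  have s1: "(\<lambda>n. diffs ?c n * y ^ n) sums H1 m y" unfolding H1_def using summable_a1[OF y] by (simp add: summable_sums)
  have s2: "(\<lambda>n. diffs (diffs ?c) n * y ^ n) sums H2 m y" unfolding H2_def using summable_a2[OF y] by (simp add: summable_sums)
  have s0: "(\<lambda>n. a (m - 2) n * y ^ n) sums H (m - 2) y" unfolding H_def using summable_a[OF y] by (simp add: summable_sums)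
  have t1: "(\<lambda>n. real n * ?c n * y ^ n) sums (y * H1 m y)"
  proof -
    have "(\<lambda>n. y * (diffs ?c n * y ^ n)) sums (y * H1 m y)" by (rule sums_mult[OF s1])
    then have "(\<lambda>n. real (Suc n) * ?c (Suc n) * y ^ (Suc n)) sums (y * H1 m y)"
      by (simp add: diffs_def algebra_simps)
    then show ?thesis using sums_Suc_iff[of "\<lambda>n. real n * ?c n * y ^ n"] by simp
  qed
  have t2: "(\<lambda>n. real n * (real n - 1) * ?c n * y ^ n) sums (y^2 * H2 m y)"
  proof -
    have "(\<lambda>n. y^2 * (diffs (diffs ?c) n * y ^ n)) sums (y^2 * H2 m y)" by (rule sums_mult[OF s2])
    then have "(\<lambda>n. real (n + 2) * (real (n + 2) - 1) * ?c (n + 2) * y ^ (n + 2)) sums (y^2 * H2 m y)"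
      by (simp add: diffs_def algebra_simps power_add power2_eq_square)
    then show ?thesis using sums_iff_shift[of "\<lambda>n. real n * (real n - 1) * ?c n * y ^ n" 2]
      by (simp add: numeral_2_eq_2)
  qed
  have "(\<lambda>n. diffs (diffs ?c) n * y ^ n - (real n * (real n - 1) * ?c n * y ^ n + real n * ?c n * y ^ n))
        sums (H2 m y - (y^2 * H2 m y + y * H1 m y))"
    by (intro sums_diff sums_add s2 t1 t2)
  moreover have "(\<lambda>n. diffs (diffs ?c) n * y ^ n - (real n * (real n - 1) * ?c n * y ^ n + real n * ?c n * y ^ n))
       = (\<lambda>n. real m * (real m - 1) * (a (m - 2) n * y ^ n))"
  proof
    fix n
    have "diffs (diffs ?c) n * y ^ n - (real n * (real n - 1) * ?c n * y ^ n + real n * ?c n * y ^ n)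
        = (diffs (diffs ?c) n - (real n)^2 * ?c n) * y ^ n"
      by (simp add: algebra_simps power2_eq_square)
    then show "diffs (diffs ?c) n * y ^ n - (real n * (real n - 1) * ?c n * y ^ n + real n * ?c n * y ^ n)
       = real m * (real m - 1) * (a (m - 2) n * y ^ n)"
      unfolding a_rec by simp
  qed
  moreover have "(\<lambda>n. real m * (real m - 1) * (a (m - 2) n * y ^ n)) sums (real m * (real m - 1) * H (m - 2) y)"
    by (rule sums_mult[OF s0])
  ultimately have "H2 m y - (y^2 * H2 m y + y * H1 m y) = real m * (real m - 1) * H (m - 2) y"
    using sums_unique2 by metis
  then show ?thesis by (simp add: algebra_simps)
qed




lemma abs_sin_half_lt1: "\<bar>x\<bar> < pi \<Longrightarrow> \<bar>sin (x / 2)\<bar> < 1"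
proof -
  assume x: "\<bar>x\<bar> < pi"
  have "cos (x / 2) > 0" using x by (intro cos_gt_zero_pi) auto
  then have "(sin (x/2))^2 < 1" using sin_cos_squared_add[of "x/2"] by (smt (verit) zero_less_power)
  then show ?thesis by (simp add: abs_square_less_1)
qed

lemma pow_deriv: "((\<lambda>x. x ^ n) has_field_derivative real n * x ^ (n - 1)) (at (x::real))"
  using DERIV_pow[of n x] by simp

lemma trig_aux:
  fixes c s h1 h2 P :: real
  assumes e: "c * c + s * s = 1"
  shows "P * (h2 * (c / 2) * (c / 2) + (- s / 4) * h1) = P / 4 * ((1 - s^2) * h2 - s * h1)"
proof -
  have cc: "c * c = 1 - s^2" using e by (simp add: power2_eq_square)
  have "P * (h2 * (c / 2) * (c / 2) + (- s / 4) * h1) = P / 4 * ((c * c) * h2 - s * h1)"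
    by (simp add: field_simps)
  then show ?thesis unfolding cc .
qed

definition psi :: "nat \<Rightarrow> real \<Rightarrow> real" where "psi m x = 2 ^ m * H m (sin (x / 2))"
definition psi1 :: "nat \<Rightarrow> real \<Rightarrow> real" where "psi1 m x = 2 ^ m * H1 m (sin (x / 2)) * (cos (x / 2) / 2)"

lemma psi_deriv: "\<bar>x\<bar> < pi \<Longrightarrow> (psi m has_field_derivative psi1 m x) (at x)"
proof -
  assume x: "\<bar>x\<bar> < pi"
  have s: "((\<lambda>x. sin (x / 2)) has_field_derivative cos (x / 2) / 2) (at x)"
    by (auto intro!: derivative_eq_intros)
  have "((\<lambda>x. H m (sin (x / 2))) has_field_derivative H1 m (sin (x/2)) * (cos (x / 2) / 2)) (at x)"
    by (rule DERIV_chain2[OF H_deriv[OF abs_sin_half_lt1[OF x]] s])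
  then show ?thesis unfolding psi_def[abs_def] psi1_def
    by (auto intro!: derivative_eq_intros simp: mult.assoc)
qed

lemma psi1_deriv: "\<bar>x\<bar> < pi \<Longrightarrow> (psi1 m has_field_derivative real m * (real m - 1) * (2 ^ m / 4) * H (m - 2) (sin (x / 2))) (at x)"
proof -
  assume x: "\<bar>x\<bar> < pi"
  have y: "\<bar>sin (x/2)\<bar> < 1" by (rule abs_sin_half_lt1[OF x])
  have s: "((\<lambda>x. sin (x / 2)) has_field_derivative cos (x / 2) / 2) (at x)"
    by (auto intro!: derivative_eq_intros)
  have h: "((\<lambda>x. H1 m (sin (x / 2))) has_field_derivative H2 m (sin (x/2)) * (cos (x / 2) / 2)) (at x)"
    by (rule DERIV_chain2[OF H1_deriv[OF y] s])
  have c: "((\<lambda>x. cos (x / 2) / 2) has_field_derivative - sin (x / 2) / 4) (at x)"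
    by (auto intro!: derivative_eq_intros)
  have hm: "((\<lambda>x. H1 m (sin(x/2)) * (cos(x/2)/2)) has_field_derivative H2 m (sin (x/2)) * (cos (x / 2) / 2) * (cos (x / 2) / 2) + (- sin (x / 2) / 4) * H1 m (sin (x / 2))) (at x)"
    by (rule DERIV_mult[OF h c])
  have "(psi1 m has_field_derivative 2 ^ m * (H2 m (sin (x/2)) * (cos (x / 2) / 2) * (cos (x / 2) / 2) + (- sin (x / 2) / 4) * H1 m (sin (x / 2)))) (at x)"
    using DERIV_cmult[OF hm, of "2^m"] unfolding psi1_def[abs_def] by (simp add: mult.assoc)
  also have "2 ^ m * (H2 m (sin (x/2)) * (cos (x / 2) / 2) * (cos (x / 2) / 2) + (- sin (x / 2) / 4) * H1 m (sin (x / 2)))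
      = (2 ^ m / 4) * ((1 - (sin (x/2))^2) * H2 m (sin (x/2)) - sin (x/2) * H1 m (sin (x/2)))"
    using trig_aux[OF sin_cos_squared_add3[of "x/2"]] .
  also have "\<dots> = real m * (real m - 1) * (2 ^ m / 4) * H (m - 2) (sin (x / 2))"
    unfolding H_ode[OF y] by simp
  finally show ?thesis .
qed

lemma a_0: "a m 0 = (if m = 0 then 1 else 0)"
  by (auto simp: a_def coeff_1)

lemma a_1: "a m (Suc 0) = (if m = 1 then 1 else 0)"
  by (auto simp: a_def coeff_pCons split: nat.splits)

lemma psi_eq: "\<bar>x\<bar> < pi \<Longrightarrow> psi m x = x ^ m"
proof (induction m arbitrary: x rule: nat_less_induct)
  case (1 m)
  define S where "S = {-pi<..<pi}"
  have S: "convex S" "open S" "0 \<in> S" unfolding S_def by auto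
  have inS: "x \<in> S \<longleftrightarrow> \<bar>x\<bar> < pi" for x unfolding S_def by auto
  have D1d: "((\<lambda>x. psi1 m x - real m * x ^ (m - 1)) has_field_derivative 0) (at x within S)" if "x \<in> S" for x
  proof -
    have x: "\<bar>x\<bar> < pi" using that inS by auto
    have "((\<lambda>x. psi1 m x - real m * x ^ (m - 1)) has_field_derivative
       (real m * (real m - 1) * (2 ^ m / 4) * H (m - 2) (sin (x / 2)) - real m * (real (m - 1) * x ^ (m - 1 - 1)))) (at x)"
      by (intro DERIV_diff psi1_deriv[OF x] DERIV_cmult pow_deriv)
    also have "real m * (real m - 1) * (2 ^ m / 4) * H (m - 2) (sin (x / 2)) - real m * (real (m - 1) * x ^ (m - 1 - 1)) = 0"
    proof (cases "m \<ge> 2")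
      case True
      have "psi (m - 2) x = x ^ (m - 2)" using 1 True x by auto
      moreover have "(2::real) ^ m / 4 = 2 ^ (m - 2)"
        using True by (metis (no_types) le_add_diff_inverse2 nonzero_mult_div_cancel_right power_add
            power2_eq_square zero_neq_numeral num_double numeral_times_numeral mult_2)
      moreover have "real (m - 1) = real m - 1" "m - 1 - 1 = m - 2" using True by auto
      ultimately show ?thesis unfolding psi_def by (simp add: algebra_simps)
    next
      case False
      then have "m = 0 \<or> m = 1" by auto
      then show ?thesis by auto
    qed
    finally show ?thesis by (rule has_field_derivative_at_within)
  qed
  obtain c where c: "\<And>x. x \<in> S \<Longrightarrow> psi1 m x - real m * x ^ (m - 1) = c"
    using has_field_derivative_zero_constant[OF S(1) D1d] by blast
  have "c = psi1 m 0 - real m * 0 ^ (m - 1)" using c[OF S(3)] by simp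
  also have "\<dots> = 0"
    by (cases "m = 1"; cases "m = 0") (auto simp: psi1_def H1_def diffs_def a_1)
  finally have D1: "\<And>x. x \<in> S \<Longrightarrow> psi1 m x = real m * x ^ (m - 1)" using c by auto
  have Dd: "((\<lambda>x. psi m x - x ^ m) has_field_derivative 0) (at x within S)" if "x \<in> S" for x
  proof -
    have x: "\<bar>x\<bar> < pi" using that inS by auto
    have "((\<lambda>x. psi m x - x ^ m) has_field_derivative (psi1 m x - real m * x ^ (m - 1))) (at x)"
      by (intro DERIV_diff psi_deriv[OF x] pow_deriv)
    then show ?thesis using D1[OF that] by (simp add: has_field_derivative_at_within)
  qed
  obtain d where d: "\<And>x. x \<in> S \<Longrightarrow> psi m x - x ^ m = d"
    using has_field_derivative_zero_constant[OF S(1) Dd] by blast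
  have "d = psi m 0 - 0 ^ m" using d[OF S(3)] by simp
  also have "\<dots> = 0" by (auto simp: psi_def H_def a_0)
  finally show ?case using d[of x] 1(2) inS by auto
qed

lemma psi1_eq: "\<bar>x\<bar> < pi \<Longrightarrow> psi1 m x = real m * x ^ (m - 1)"
proof -
  assume x: "\<bar>x\<bar> < pi"
  have "((\<lambda>x. x ^ m) has_field_derivative psi1 m x) (at x)"
    by (rule has_field_derivative_transform_within_open[OF psi_deriv[OF x], of "{-pi<..<pi}"])
       (use x psi_eq in auto)
  moreover have "((\<lambda>x. x ^ m) has_field_derivative real m * x ^ (m - 1)) (at x)"
    by (rule pow_deriv)
  ultimately show ?thesis by (rule DERIV_unique)
qed




definition innr :: "nat \<Rightarrow> real \<Rightarrow> nat \<Rightarrow> real" where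
  "innr l L d = (\<Sum>p=0..l. (-1) ^ p * falling_fact (real l) p * L ^ (l - p) / real d ^ (p + 1))"

lemma falling_fact_Suc: "falling_fact z (Suc p) = z * falling_fact (z - 1) p"
  unfolding falling_fact_def by (subst prod.lessThan_Suc_shift) (simp add: algebra_simps)

lemma inner_0: "innr 0 L d = 1 / real d"
  by (simp add: innr_def falling_fact_def)

lemma inner_Suc: "innr (Suc l) L d = L ^ Suc l / real d - (real (Suc l) / real d) * innr l L d"
proof -
  have "innr (Suc l) L d = L ^ Suc l / real d + (\<Sum>p=0..l. (-1) ^ Suc p * falling_fact (real (Suc l)) (Suc p) * L ^ (l - p) / real d ^ (p + 2))"
    unfolding innr_def by (subst sum.atLeast0_atMost_Suc_shift) (simp add: falling_fact_def)
  also have "(\<Sum>p=0..l. (-1) ^ Suc p * falling_fact (real (Suc l)) (Suc p) * L ^ (l - p) / real d ^ (p + 2))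
     = - (real (Suc l) / real d) * innr l L d"
    unfolding innr_def sum_distrib_left
    by (intro sum.cong; cases "d = 0") (auto simp: falling_fact_Suc field_simps)
  finally show ?thesis by simp
qed

definition V :: "nat \<Rightarrow> nat \<Rightarrow> real \<Rightarrow> real" where
  "V l d y = y ^ d * innr l (ln y) d"

lemma V_deriv:
  assumes "y > 0" "d \<ge> 1"
  shows "(V l d has_field_derivative y ^ (d - 1) * (ln y) ^ l) (at y)"
proof (induction l)
  case 0
  have "((\<lambda>y. y ^ d * (1 / real d)) has_field_derivative real d * y ^ (d - 1) * (1 / real d)) (at y)"
    by (intro DERIV_cmult_right pow_deriv)
  then show ?case using assms unfolding V_def[abs_def] inner_0 by simp
next
  case (Suc l)
  have eq: "V (Suc l) d = (\<lambda>y. y ^ d * (ln y) ^ Suc l / real d - (real (Suc l) / real d) * V l d y)"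
    unfolding V_def[abs_def] inner_Suc by (auto simp: algebra_simps)
  have lp: "((\<lambda>y. (ln y) ^ Suc l) has_field_derivative real (Suc l) * (ln y) ^ l * (1 / y)) (at y)"
    using DERIV_chain2[OF pow_deriv[of "Suc l" "ln y"] DERIV_ln[OF assms(1)]] by (simp add: divide_inverse)
  have yd: "((\<lambda>y. y ^ d) has_field_derivative real d * y ^ (d - 1)) (at y)" by (rule pow_deriv)
  have "((\<lambda>y. y ^ d * (ln y) ^ Suc l / real d - (real (Suc l) / real d) * V l d y) has_field_derivative
      (real d * y ^ (d - 1) * (ln y) ^ Suc l + real (Suc l) * (ln y) ^ l * (1 / y) * y ^ d) / real d
       - (real (Suc l) / real d) * (y ^ (d - 1) * (ln y) ^ l)) (at y)"
    by (intro DERIV_diff DERIV_cmult DERIV_cdivide DERIV_mult yd lp Suc)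
  also have "y ^ d = y * y ^ (d - 1)"
    using assms by (metis Suc_diff_le diff_Suc_1 power_Suc)
  then have "(real d * y ^ (d - 1) * (ln y) ^ Suc l + real (Suc l) * (ln y) ^ l * (1 / y) * y ^ d) / real d
       - (real (Suc l) / real d) * (y ^ (d - 1) * (ln y) ^ l) = y ^ (d - 1) * (ln y) ^ Suc l"
    using assms by (simp add: field_simps)
  finally show ?case unfolding eq .
qed




definition W :: "nat \<Rightarrow> nat \<Rightarrow> real \<Rightarrow> real" where
  "W r d y = (\<Sum>l=0..r. real (r choose l) * ln 2 ^ (r - l) * V l d y)"

lemma W_deriv:
  assumes "y > 0" "d \<ge> 1"
  shows "(W r d has_field_derivative y ^ (d - 1) * (ln (2 * y)) ^ r) (at y)"
proof -
  have "(W r d has_field_derivative (\<Sum>l=0..r. real (r choose l) * ln 2 ^ (r - l) * (y ^ (d - 1) * (ln y) ^ l))) (at y)"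
    unfolding W_def[abs_def] by (intro DERIV_sum DERIV_cmult V_deriv assms)
  also have "(\<Sum>l=0..r. real (r choose l) * ln 2 ^ (r - l) * (y ^ (d - 1) * (ln y) ^ l))
      = y ^ (d - 1) * (\<Sum>l\<le>r. real (r choose l) * (ln y) ^ l * ln 2 ^ (r - l))"
    by (simp add: sum_distrib_left atMost_atLeast0 algebra_simps)
  also have "(\<Sum>l\<le>r. real (r choose l) * (ln y) ^ l * ln 2 ^ (r - l)) = (ln y + ln 2) ^ r"
    by (rule binomial_ring[symmetric])
  also have "ln y + ln 2 = ln (2 * y)" using assms by (simp add: ln_mult)
  finally show ?thesis .
qed

lemma y_ln_bound:
  assumes "0 < y" "y \<le> 1"
  shows "y * \<bar>ln y\<bar> ^ r \<le> real r ^ r"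
proof (cases "r = 0")
  case True then show ?thesis using assms by simp
next
  case False
  define z where "z = y powr (1 / real r)"
  have z: "z > 0" unfolding z_def using assms by simp
  have lz: "ln z = ln y / real r" unfolding z_def using assms by (simp add: ln_powr)
  have "ln (1 / z) \<le> 1 / z - 1" using z by (intro ln_le_minus_one) auto
  then have "- ln z \<le> 1 / z" using z by (simp add: ln_div)
  then have "- ln y \<le> real r / z" using lz False by (simp add: field_simps)
  moreover have "ln y \<le> 0" using assms by simp
  ultimately have "\<bar>ln y\<bar> \<le> real r / z" by simp
  then have "\<bar>ln y\<bar> ^ r \<le> (real r / z) ^ r" by (intro power_mono) auto
  also have "\<dots> = real r ^ r / y"
  proof -
    have "z ^ r = y" unfolding z_def using assms False
      by (simp add: powr_realpow[symmetric] powr_powr)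
    then show ?thesis by (simp add: power_divide)
  qed
  finally have "\<bar>ln y\<bar> ^ r \<le> real r ^ r / y" .
  then show ?thesis using assms by (simp add: field_simps)
qed

lemma pow_ln_lim:
  assumes "d \<ge> 2"
  shows "((\<lambda>y::real. y ^ d * (ln y) ^ s) \<longlongrightarrow> 0) (at_right 0)"
proof -
  have g: "((\<lambda>y. real s ^ s * y) \<longlongrightarrow> 0) (at_right (0::real))"
    by (auto intro!: tendsto_eq_intros)
  have "eventually (\<lambda>y. y \<in> {0<..<1}) (at_right (0::real))"
    by (intro eventually_at_right_real) auto
  then have ev: "eventually (\<lambda>y. norm (y ^ d * (ln y) ^ s) \<le> real s ^ s * y) (at_right 0)"
  proof eventually_elim
    case (elim y)
    then have y: "0 < y" "y < 1" by auto
    obtain d' where d': "d = Suc d'" using assms by (cases d) auto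
    have "norm (y ^ d * (ln y) ^ s) = y ^ (d - 1) * (y * \<bar>ln y\<bar> ^ s)"
      using y unfolding d' by (simp add: abs_mult power_abs)
    also have "\<dots> \<le> y ^ (d - 1) * real s ^ s"
      using y by (intro mult_left_mono y_ln_bound) auto
    also have "y ^ (d - 1) \<le> y"
      using power_decreasing[of 1 "d - 1" y] y assms by simp
    then have "y ^ (d - 1) * real s ^ s \<le> y * real s ^ s" by (intro mult_right_mono) auto
    finally show ?case by (simp add: mult.commute)
  qed
  note X = Lim_null_comparison[OF ev g]
  show ?thesis using X by simp
qed

lemma V_lim:
  assumes "d \<ge> 2"
  shows "(V l d \<longlongrightarrow> 0) (at_right 0)"
proof -
  have eq: "V l d = (\<lambda>y. \<Sum>p=0..l. (-1) ^ p * falling_fact (real l) p / real d ^ (p + 1) * (y ^ d * (ln y) ^ (l - p)))"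
    unfolding V_def[abs_def] innr_def by (auto simp: sum_distrib_left algebra_simps)
  show ?thesis unfolding eq
    by (intro tendsto_null_sum tendsto_mult_right_zero pow_ln_lim assms)
qed

lemma W_lim:
  assumes "d \<ge> 2"
  shows "(W r d \<longlongrightarrow> 0) (at_right 0)"
  unfolding W_def[abs_def]
  by (intro tendsto_null_sum tendsto_mult_right_zero V_lim assms)

lemma W_0: "d \<ge> 1 \<Longrightarrow> W r d 0 = 0"
  by (simp add: W_def V_def power_0_left)

lemma sin_ge_tcos:
  assumes "0 \<le> t" "t \<le> pi / 2"
  shows "t * cos t \<le> sin t"
proof -
  have "sin 0 - 0 * cos 0 \<le> sin t - t * cos t"
  proof (rule DERIV_nonneg_imp_nondecreasing[OF assms(1)])
    fix u assume u: "0 \<le> u" "u \<le> t"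
    have "((\<lambda>u. sin u - u * cos u) has_field_derivative u * sin u) (at u)"
      by (auto intro!: derivative_eq_intros)
    moreover have "u * sin u \<ge> 0" using u assms by (intro mult_nonneg_nonneg sin_ge_zero) auto
    ultimately show "\<exists>y. ((\<lambda>u. sin u - u * cos u) has_field_derivative y) (at u) \<and> y \<ge> 0" by blast
  qed
  then show ?thesis by simp
qed

lemma integrand_bound:
  assumes "k \<ge> 1" "0 < x" "x < pi"
  shows "x ^ k * \<bar>ln (2 * sin (x / 2))\<bar> ^ r \<le> pi ^ k + 2 * pi ^ (k - 1) * real r ^ r"
proof -
  have s: "sin (x / 2) > 0" using assms by (intro sin_gt_zero) auto
  have s1: "sin (x / 2) \<le> 1" by simp
  have xk: "x ^ k \<le> pi ^ k" using assms by (intro power_mono) auto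
  show ?thesis
  proof (cases "2 * sin (x / 2) \<ge> 1")
    case True
    have "\<bar>ln (2 * sin (x / 2))\<bar> \<le> 1"
    proof -
      have "ln (2 * sin (x / 2)) \<ge> 0" using True by simp
      moreover have "ln (2 * sin (x / 2)) \<le> 2 * sin (x / 2) - 1" using s by (intro ln_le_minus_one) auto
      ultimately show ?thesis using s1 by linarith
    qed
    then have "\<bar>ln (2 * sin (x / 2))\<bar> ^ r \<le> 1" by (simp add: power_le_one)
    then have "x ^ k * \<bar>ln (2 * sin (x / 2))\<bar> ^ r \<le> pi ^ k * 1"
      using xk by (intro mult_mono) auto
    moreover have "0 \<le> 2 * pi ^ (k - 1) * real r ^ r" by simp
    ultimately show ?thesis by linarith
  next
    case False
    let ?z = "2 * sin (x / 2)"
    have z: "0 < ?z" "?z \<le> 1" using s False by auto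
    have c: "cos (x / 2) > 1 / 2"
    proof (rule ccontr)
      assume nc: "\<not> cos (x / 2) > 1 / 2"
      have cp: "cos (x / 2) > 0" using assms by (intro cos_gt_zero_pi) auto
      have "(cos (x/2))^2 \<le> (1/2)^2" using nc cp by (intro power_mono) auto
      moreover have "(sin (x/2))^2 \<le> (1/2)^2" using False s by (intro power_mono) auto
      ultimately show False using sin_cos_squared_add[of "x/2"] by (unfold power2_eq_square) linarith
    qed
    have "x / 2 * cos (x / 2) \<le> sin (x / 2)"
      using assms by (intro sin_ge_tcos) auto
    moreover have "x / 2 * (1 / 2) \<le> x / 2 * cos (x / 2)"
      using c assms by (intro mult_left_mono) auto
    ultimately have xz: "x \<le> 2 * ?z" by simp
    have "x ^ k = x ^ (k - 1) * x" using assms by (metis Suc_diff_le diff_Suc_1 power_Suc2)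
    also have "\<dots> \<le> pi ^ (k - 1) * (2 * ?z)" using assms xz by (intro mult_mono power_mono) auto
    finally have "x ^ k * \<bar>ln ?z\<bar> ^ r \<le> pi ^ (k - 1) * (2 * ?z) * \<bar>ln ?z\<bar> ^ r"
      by (intro mult_right_mono) auto
    also have "\<dots> = 2 * pi ^ (k - 1) * (?z * \<bar>ln ?z\<bar> ^ r)" by simp
    also have "\<dots> \<le> 2 * pi ^ (k - 1) * real r ^ r" using z by (intro mult_left_mono y_ln_bound) auto
    also have "\<dots> \<le> pi ^ k + 2 * pi ^ (k - 1) * real r ^ r"
      by simp
    finally show ?thesis .
  qed
qed




lemma sin_half_pos: "0 < x \<Longrightarrow> x \<le> pi \<Longrightarrow> sin (x / 2) > 0"
  by (intro sin_gt_zero) auto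

lemma W_sin_deriv:
  assumes "0 < x" "x \<le> pi" "d \<ge> 1"
  shows "((\<lambda>x. W r d (sin (x / 2))) has_field_derivative
        (sin (x/2)) ^ (d - 1) * (ln (2 * sin (x/2))) ^ r * (cos (x/2) / 2)) (at x)"
proof -
  have s: "((\<lambda>x. sin (x / 2)) has_field_derivative cos (x / 2) / 2) (at x)"
    by (auto intro!: derivative_eq_intros)
  show ?thesis
    by (rule DERIV_chain2[OF W_deriv[OF sin_half_pos[OF assms(1,2)] assms(3)] s])
qed

lemma F_cont:
  assumes "0 < \<theta>" "\<theta> \<le> pi" "d \<ge> 2"
  shows "continuous_on {0..\<theta>} (\<lambda>x. 2 * W r d (sin (x / 2)))"
proof -
  have "continuous (at x within {0..\<theta>}) (\<lambda>x. W r d (sin (x / 2)))" if x: "x \<in> {0..\<theta>}" for x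
  proof (cases "x = 0")
    case False
    then have x0: "0 < x" "x \<le> pi" using x assms by auto
    have "((\<lambda>x. W r d (sin (x / 2))) has_field_derivative
        (sin (x/2)) ^ (d - 1) * (ln (2 * sin (x/2))) ^ r * (cos (x/2) / 2)) (at x)"
      by (rule W_sin_deriv[OF x0]) (use assms in simp)
    then show ?thesis
      by (rule continuous_at_imp_continuous_at_within[OF DERIV_isCont])
  next
    case True
    let ?S = "{0..\<theta>}"
    have lim: "((\<lambda>x. sin (x / 2)) \<longlongrightarrow> 0) (at 0 within ?S)"
    proof -
      have "((\<lambda>x. x / 2) \<longlongrightarrow> 0 / 2) (at 0 within ?S)"
        by (rule tendsto_divide[OF tendsto_ident_at tendsto_const]) simp
      then have "((\<lambda>x. sin (x / 2)) \<longlongrightarrow> sin (0 / 2)) (at 0 within ?S)"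
        by (rule tendsto_sin)
      then show ?thesis by simp
    qed
    have ev: "eventually (\<lambda>x. sin (x / 2) \<in> {0<..} \<and> sin (x / 2) \<noteq> 0) (at 0 within ?S)"
      unfolding eventually_at_filter
    proof (rule always_eventually, intro allI impI)
      fix x :: real assume "x \<noteq> 0" "x \<in> ?S"
      then have "sin (x / 2) > 0" using assms by (intro sin_half_pos) auto
      then show "sin (x / 2) \<in> {0<..} \<and> sin (x / 2) \<noteq> 0" by simp
    qed
    have fl: "filterlim (\<lambda>x. sin (x / 2)) (at_right 0) (at 0 within ?S)"
      unfolding filterlim_at using lim ev by auto
    have "((\<lambda>x. W r d (sin (x / 2))) \<longlongrightarrow> 0) (at 0 within ?S)"
      by (rule filterlim_compose[OF W_lim[OF assms(3)] fl])
    then show ?thesis unfolding continuous_within True using W_0 assms by simp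
  qed
  then show ?thesis
    by (intro continuous_on_mult continuous_on_const) (simp add: continuous_on_eq_continuous_within)
qed

lemma term_integral:
  assumes "0 < \<theta>" "\<theta> \<le> pi" "d \<ge> 2"
  shows "((\<lambda>x. cos (x / 2) * sin (x / 2) ^ (d - 1) * ln (2 * sin (x / 2)) ^ r) has_integral
           2 * W r d (sin (\<theta> / 2))) {0..\<theta>}"
proof -
  have "((\<lambda>x. cos (x / 2) * sin (x / 2) ^ (d - 1) * ln (2 * sin (x / 2)) ^ r) has_integral
           2 * W r d (sin (\<theta> / 2)) - 2 * W r d (sin (0 / 2))) {0..\<theta>}"
  proof (rule fundamental_theorem_of_calculus_interior)
    show "0 \<le> \<theta>" using assms by simp
    show "continuous_on {0..\<theta>} (\<lambda>x. 2 * W r d (sin (x / 2)))" by (rule F_cont[OF assms])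
    fix x assume x: "x \<in> {0<..<\<theta>}"
    then have x0: "0 < x" "x \<le> pi" using assms by auto
    have "((\<lambda>x. W r d (sin (x / 2))) has_field_derivative
        (sin (x/2)) ^ (d - 1) * (ln (2 * sin (x/2))) ^ r * (cos (x/2) / 2)) (at x)"
      by (rule W_sin_deriv[OF x0]) (use assms in simp)
    then have D: "((\<lambda>x. 2 * W r d (sin (x / 2))) has_field_derivative
        2 * ((sin (x/2)) ^ (d - 1) * (ln (2 * sin (x/2))) ^ r * (cos (x/2) / 2))) (at x)"
      by (rule DERIV_cmult)
    have e: "2 * ((sin (x/2)) ^ (d - 1) * (ln (2 * sin (x/2))) ^ r * (cos (x/2) / 2))
      = cos (x / 2) * sin (x / 2) ^ (d - 1) * ln (2 * sin (x / 2)) ^ r" by simp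
    from D have "((\<lambda>x. 2 * W r d (sin (x / 2))) has_field_derivative
        cos (x / 2) * sin (x / 2) ^ (d - 1) * ln (2 * sin (x / 2)) ^ r) (at x)"
      unfolding e .
    then show "((\<lambda>x. 2 * W r d (sin (x / 2))) has_vector_derivative
        cos (x / 2) * sin (x / 2) ^ (d - 1) * ln (2 * sin (x / 2)) ^ r) (at x)"
      by (simp add: has_real_derivative_iff_has_vector_derivative)
  qed
  then show ?thesis using W_0 assms by simp
qed




definition e :: "nat \<Rightarrow> nat \<Rightarrow> real" where "e k n = diffs (a (Suc k)) n / real (Suc k)"

lemma e_formula: "e k n = fact k * coeff (Pt (Suc n)) (Suc k) / fact n"
proof -
  have "e k n = real (Suc n) * (fact (Suc k) * coeff (Pt (Suc n)) (Suc k) / fact (Suc n)) / real (Suc k)"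
    by (simp add: e_def diffs_def a_def)
  also have "\<dots> = fact k * coeff (Pt (Suc n)) (Suc k) / fact n"
  proof -
    have aux2: "u \<noteq> 0 \<Longrightarrow> v \<noteq> 0 \<Longrightarrow> (u::real) * (v * F * c / (u * G)) / v = F * c / G" for u v F c G
      by (cases "G = 0") (simp_all add: field_simps)
    have "fact (Suc k) = real (Suc k) * (fact k :: real)" "fact (Suc n) = real (Suc n) * (fact n :: real)"
      by simp_all
    then show ?thesis using aux2[of "real (Suc n)" "real (Suc k)" "fact k" "coeff (Pt (Suc n)) (Suc k)" "fact n"]
      by (simp only: of_nat_eq_0_iff nat.distinct(1))
  qed
  finally show ?thesis .
qed

lemma e_nonneg: "e k n \<ge> 0"
  unfolding e_formula using Pt_nonneg by simp

lemma e_zero: "n < k \<or> odd (n + k) \<Longrightarrow> e k n = 0"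
  unfolding e_formula by (subst Pt_zero) auto

lemma e_Q: "e k (k + 2 * q) = fact k * ((-4) ^ q * Q (k + 1) (2 * q) 2) / fact (k + 2 * q)"
  unfolding e_formula Pt_Q by simp

lemma sums_e: "\<bar>y\<bar> < 1 \<Longrightarrow> (\<lambda>n. e k n * y ^ n) sums (H1 (Suc k) y / real (Suc k))"
proof -
  assume y: "\<bar>y\<bar> < 1"
  have "(\<lambda>n. diffs (a (Suc k)) n * y ^ n) sums H1 (Suc k) y"
    unfolding H1_def using summable_a1[OF y] by (simp add: summable_sums)
  then have "(\<lambda>n. diffs (a (Suc k)) n * y ^ n / real (Suc k)) sums (H1 (Suc k) y / real (Suc k))"
    by (rule sums_divide)
  then show ?thesis unfolding e_def by (simp add: field_simps)
qed

lemma x_series: "\<bar>x\<bar> < pi \<Longrightarrow> x ^ k = 2 ^ k * cos (x / 2) * (H1 (Suc k) (sin (x / 2)) / real (Suc k))"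
proof -
  assume x: "\<bar>x\<bar> < pi"
  have "2 ^ Suc k * H1 (Suc k) (sin (x / 2)) * (cos (x / 2) / 2) = real (Suc k) * x ^ k"
    using psi1_eq[OF x, of "Suc k"] unfolding psi1_def by simp
  then show ?thesis by (simp add: field_simps)
qed

lemma main_integral:
  assumes k: "k \<ge> 1" and th: "0 < \<theta>" "\<theta> \<le> pi"
  shows "(\<lambda>n. 2 ^ k * e k n * (2 * W r (Suc n) (sin (\<theta> / 2)))) sums
           integral {0<..<\<theta>} (\<lambda>x. x ^ k * ln (2 * sin (x / 2)) ^ r)"
    and "(\<lambda>x. x ^ k * ln (2 * sin (x / 2)) ^ r) absolutely_integrable_on {0<..<\<theta>}"
proof -
  let ?S = "{0<..<\<theta>}"
  let ?C = "pi ^ k + 2 * pi ^ (k - 1) * real r ^ r"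
  let ?g = "\<lambda>x. x ^ k * ln (2 * sin (x / 2)) ^ r"
  define tf where "tf n x = 2 ^ k * e k n * (cos (x / 2) * sin (x / 2) ^ n * ln (2 * sin (x / 2)) ^ r)" for n x
  define T where "T n = 2 ^ k * e k n * (2 * W r (Suc n) (sin (\<theta> / 2)))" for n
  have tfi: "(tf n has_integral T n) ?S" for n
  proof (cases "n = 0")
    case True
    then have "e k n = 0" using k by (intro e_zero) auto
    then show ?thesis unfolding tf_def T_def by simp
  next
    case False
    have "((\<lambda>x. cos (x / 2) * sin (x / 2) ^ (Suc n - 1) * ln (2 * sin (x / 2)) ^ r) has_integral
           2 * W r (Suc n) (sin (\<theta> / 2))) {0..\<theta>}"
      by (rule term_integral) (use th False in auto)
    then have "(tf n has_integral T n) {0..\<theta>}"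
      unfolding tf_def T_def by (intro has_integral_mult_right) simp
    then show ?thesis by (simp add: has_integral_Icc_iff_Ioo)
  qed
  have fi: "((\<lambda>x. \<Sum>n<M. tf n x) has_integral (\<Sum>n<M. T n)) ?S" for M
    by (rule has_integral_sum) (auto intro: tfi)
  have sumeq: "(\<Sum>n<M. tf n x) = (2 ^ k * cos (x / 2) * ln (2 * sin (x / 2)) ^ r) * (\<Sum>n<M. e k n * sin (x / 2) ^ n)" for M x
    unfolding tf_def sum_distrib_left by (intro sum.cong) auto
  have inS: "\<bar>x\<bar> < pi" "\<bar>sin (x / 2)\<bar> < 1" "0 < x" "x < pi" if "x \<in> ?S" for x
    using that th abs_sin_half_lt1[of x] by auto
  have conv: "(\<lambda>M. \<Sum>n<M. tf n x) \<longlonglongrightarrow> ?g x" if x: "x \<in> ?S" for x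
  proof -
    have "(\<lambda>M. \<Sum>n<M. e k n * sin (x / 2) ^ n) \<longlonglongrightarrow> H1 (Suc k) (sin (x / 2)) / real (Suc k)"
      using sums_e[OF inS(2)[OF x]] unfolding sums_def .
    then have "(\<lambda>M. (2 ^ k * cos (x / 2) * ln (2 * sin (x / 2)) ^ r) * (\<Sum>n<M. e k n * sin (x / 2) ^ n))
      \<longlonglongrightarrow> (2 ^ k * cos (x / 2) * ln (2 * sin (x / 2)) ^ r) * (H1 (Suc k) (sin (x / 2)) / real (Suc k))"
      by (rule tendsto_mult_left)
    moreover have "(2 ^ k * cos (x / 2) * ln (2 * sin (x / 2)) ^ r) * (H1 (Suc k) (sin (x / 2)) / real (Suc k)) = ?g x"
      using x_series[OF inS(1)[OF x], of k] by (simp add: algebra_simps)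
    ultimately show ?thesis unfolding sumeq by simp
  qed
  have le: "norm (\<Sum>n<M. tf n x) \<le> ?C" if x: "x \<in> ?S" for x M
  proof -
    let ?c = "2 ^ k * cos (x / 2) * ln (2 * sin (x / 2)) ^ r"
    let ?y = "sin (x / 2)"
    have s0: "0 \<le> (\<Sum>n<M. e k n * ?y ^ n)"
      using inS[OF x] sin_half_pos[of x] by (intro sum_nonneg mult_nonneg_nonneg e_nonneg) auto
    have s1: "(\<Sum>n<M. e k n * ?y ^ n) \<le> H1 (Suc k) ?y / real (Suc k)"
    proof -
      have "(\<Sum>n<M. e k n * ?y ^ n) \<le> (\<Sum>n. e k n * ?y ^ n)"
        using sums_e[OF inS(2)[OF x]] inS[OF x] sin_half_pos[of x]
        by (intro sum_le_suminf) (auto simp: sums_iff intro!: mult_nonneg_nonneg e_nonneg)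
      then show ?thesis using sums_e[OF inS(2)[OF x]] by (simp add: sums_iff)
    qed
    have "norm (\<Sum>n<M. tf n x) = \<bar>?c\<bar> * (\<Sum>n<M. e k n * ?y ^ n)"
      unfolding sumeq using s0 by (simp add: abs_mult)
    also have "\<dots> \<le> \<bar>?c\<bar> * (H1 (Suc k) ?y / real (Suc k))"
      by (intro mult_left_mono s1) auto
    also have "\<dots> = \<bar>?c * (H1 (Suc k) ?y / real (Suc k))\<bar>"
    proof -
      have "0 \<le> H1 (Suc k) ?y / real (Suc k)" using s0 s1 by linarith
      then have "0 \<le> H1 (Suc k) ?y" by (simp add: zero_le_divide_iff)
      then show ?thesis by (simp add: abs_mult)
    qed
    also have "?c * (H1 (Suc k) ?y / real (Suc k)) = ?g x"
      using x_series[OF inS(1)[OF x], of k] by (simp add: algebra_simps)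
    also have "\<bar>?g x\<bar> = x ^ k * \<bar>ln (2 * sin (x / 2))\<bar> ^ r"
      using inS[OF x] by (simp add: abs_mult power_abs)
    also have "\<dots> \<le> ?C"
      using inS[OF x] k by (intro integrand_bound) auto
    finally show ?thesis .
  qed
  have hi: "(\<lambda>x. ?C) integrable_on ?S"
    using integrable_const_ivl[of ?C 0 \<theta>] by (simp add: integrable_on_Icc_iff_Ioo)
  have dc: "?g integrable_on ?S" "(\<lambda>M. integral ?S (\<lambda>x. \<Sum>n<M. tf n x)) \<longlonglongrightarrow> integral ?S ?g"
    by (rule dominated_convergence[where h="\<lambda>x. ?C", OF _ hi le conv]; use fi in blast)+
  have "integral ?S (\<lambda>x. \<Sum>n<M. tf n x) = (\<Sum>n<M. T n)" for M
    using fi by (rule integral_unique)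
  then show "(\<lambda>n. 2 ^ k * e k n * (2 * W r (Suc n) (sin (\<theta> / 2)))) sums integral ?S ?g"
    using dc(2) unfolding sums_def T_def[symmetric] by simp
  have "norm (?g x) \<le> ?C" if "x \<in> ?S" for x
    using le[OF that] tendsto_norm[OF conv[OF that]] by (intro LIMSEQ_le_const2) auto
  then show "?g absolutely_integrable_on ?S"
    by (intro absolutely_integrable_integrable_bound[OF _ dc(1) hi]) auto
qed




lemma Ls_eq:
  assumes "k \<ge> 1" "0 < \<theta>" "\<theta> \<le> pi"
  shows "Ls j k \<theta> = - integral {0<..<\<theta>} (\<lambda>x. x ^ k * ln (2 * sin (x / 2)) ^ (j - k - 1))"
proof -
  let ?S = "{0<..<\<theta>}"
  let ?g = "\<lambda>x. x ^ k * ln (2 * sin (x / 2)) ^ (j - k - 1)"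
  let ?h = "\<lambda>x. x ^ k * (ln \<bar>2 * sin (x / 2)\<bar>) ^ (j - k - 1)"
  have ai: "?g absolutely_integrable_on ?S" by (rule main_integral(2)[OF assms])
  have "(LBINT x=0..\<theta>. ?h x) = (LINT x:?S|lborel. ?h x)"
  proof -
    have "einterval 0 (ereal \<theta>) = ?S" by (auto simp: einterval_def)
    then show ?thesis unfolding interval_lebesgue_integral_def using assms by simp
  qed
  also have "\<dots> = (LINT x:?S|lborel. ?g x)"
  proof (rule set_lebesgue_integral_cong)
    show "?S \<in> sets lborel" by simp
    show "\<forall>x. x \<in> ?S \<longrightarrow> ?h x = ?g x"
    proof (intro allI impI)
      fix x assume "x \<in> ?S"
      then have "sin (x / 2) > 0" using assms by (intro sin_half_pos) auto
      then show "?h x = ?g x" by simp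
    qed
  qed
  also have "\<dots> = (LINT x:?S|lebesgue. ?g x)"
  proof -
    have m: "(\<lambda>x. indicator ?S x *\<^sub>R ?g x) \<in> borel_measurable lborel" by measurable
    show ?thesis unfolding set_lebesgue_integral_def by (rule integral_completion[OF m, symmetric])
  qed
  also have "\<dots> = integral ?S ?g"
    by (rule set_lebesgue_integral_eq_integral(2)[OF ai])
  finally show ?thesis unfolding Ls_def by simp
qed

definition Z :: "nat \<Rightarrow> nat \<Rightarrow> real \<Rightarrow> real" where
  "Z r d L = (\<Sum>l=0..r. real (r choose l) / (ln 2) ^ l * innr l L d)"

lemma W_Z: "s > 0 \<Longrightarrow> W r d s = s ^ d * ln 2 ^ r * Z r d (ln s)"
  unfolding W_def Z_def V_def sum_distrib_left
  by (intro sum.cong refl) (auto simp: power_diff field_simps)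

lemma Q0: "Q (k + 1) 0 2 = 1"
  by (simp add: Q_def stirling1s_def)




lemma X_alg:
  fixes s F fk Qv Zv l2 :: real
  assumes "F \<noteq> 0"
  shows "(-1) ^ (m + 1) / F * (2 * s) ^ (2 * m) * Qv * Zv * (fk * (2 ^ (k + 1) * s ^ (k + 1) * l2))
       = - (2 ^ k * (fk * ((-4) ^ m * Qv) / F) * (2 * (s ^ Suc (k + 2 * m) * l2 * Zv)))"
proof -
  have a1: "(2 * s) ^ (2 * m) = 4 ^ m * s ^ (2 * m)"
    by (simp add: power_mult_distrib power_mult)
  have a2: "(-4 :: real) ^ m = (-1) ^ m * 4 ^ m"
    by (metis mult_minus1 power_mult_distrib)
  have a3: "s ^ Suc (k + 2 * m) = s ^ (k + 1) * s ^ (2 * m)"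
    by (simp add: power_add)
  have a4: "(2::real) ^ (k + 1) = 2 * 2 ^ k" by simp
  show ?thesis unfolding a1 a2 a3 a4 using assms by (simp add: field_simps)
qed

theorem theorem4p1:
  fixes k j :: nat and \<theta> :: real
  assumes "k \<ge> 1" and "j \<ge> k + 1" and "0 < \<theta>" and "\<theta> \<le> pi"
  defines "\<sigma> \<equiv> sin (\<theta> / 2)"
  defines "L \<equiv> ln \<sigma>"
  shows "Ls j k \<theta> =
    (ln 2) ^ j * (2 * \<sigma> / ln 2) ^ (k + 1) *
      ( fact k * (\<Sum>q. (let q' = Suc q in
            (-1) ^ (q' + 1) / fact (k + 2 * q') * (2 * \<sigma>) ^ (2 * q') * Q (k + 1) (2 * q') 2 *
            (\<Sum>l=0..j-k-1. real ((j - k - 1) choose l) / (ln 2) ^ l *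
               (\<Sum>p=0..l. (-1) ^ p * falling_fact (real l) p * L ^ (l - p)
                              / real (k + 2 * q' + 1) ^ (p + 1)))))
        - (\<Sum>l=0..j-k-1. real ((j - k - 1) choose l) / (ln 2) ^ l *
             (\<Sum>p=0..l. (-1) ^ p * falling_fact (real l) p * L ^ (l - p)
                            / real (k + 1) ^ (p + 1))))"
proof -
  define r where "r = j - k - 1"
  have jr: "j = r + (k + 1)" unfolding r_def using assms(2) by simp
  have sp: "\<sigma> > 0" unfolding \<sigma>_def using assms by (intro sin_half_pos) auto
  define I where "I = integral {0<..<\<theta>} (\<lambda>x. x ^ k * ln (2 * sin (x / 2)) ^ r)"
  have Ls: "Ls j k \<theta> = - I" unfolding I_def r_def by (rule Ls_eq) (use assms in auto)
  define T where "T n = 2 ^ k * e k n * (2 * W r (Suc n) \<sigma>)" for n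
  have sT: "T sums I"
    unfolding T_def I_def \<sigma>_def by (rule main_integral(1)) (use assms in auto)
  have sT2: "(\<lambda>q. T (k + 2 * q)) sums I"
  proof (subst sums_mono_reindex)
    show "strict_mono (\<lambda>q. k + 2 * q)" by (intro strict_monoI) auto
    show "T n = 0" if "n \<notin> range (\<lambda>q. k + 2 * q)" for n
    proof -
      have "n < k \<or> odd (n + k)"
      proof (rule ccontr)
        assume "\<not> (n < k \<or> odd (n + k))"
        then have "k \<le> n" "even (n - k)" by auto
        then have "n = k + 2 * ((n - k) div 2)" by auto
        then show False using that by blast
      qed
      then show ?thesis unfolding T_def by (simp add: e_zero)
    qed
  qed (rule sT)
  have sT3: "(\<lambda>q. T (k + 2 * Suc q)) sums (I - T k)"
    using sums_Suc_iff[of "\<lambda>q. T (k + 2 * q)" "I - T k"] sT2 by simp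
  define c0 where "c0 = (2::real) ^ (k + 1) * \<sigma> ^ (k + 1) * ln 2 ^ r"
  have c0: "(ln 2) ^ j * (2 * \<sigma> / ln 2) ^ (k + 1) = c0"
    unfolding c0_def jr by (simp add: power_add power_divide power_mult_distrib)
  have c0nz: "c0 \<noteq> 0" "fact k * c0 \<noteq> 0" unfolding c0_def using sp by auto
  have inner_eq: "(\<Sum>l=0..r. real (r choose l) / (ln 2) ^ l *
               (\<Sum>p=0..l. (-1) ^ p * falling_fact (real l) p * L ^ (l - p) / real d ^ (p + 1)))
         = Z r d L" for d
    unfolding Z_def innr_def ..
  define X where "X = (\<lambda>q. (let q' = Suc q in
            (-1) ^ (q' + 1) / fact (k + 2 * q') * (2 * \<sigma>) ^ (2 * q') * Q (k + 1) (2 * q') 2 *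
            (\<Sum>l=0..j-k-1. real ((j - k - 1) choose l) / (ln 2) ^ l *
               (\<Sum>p=0..l. (-1) ^ p * falling_fact (real l) p * L ^ (l - p)
                              / real (k + 2 * q' + 1) ^ (p + 1)))))"
  have Xeq: "X q = - T (k + 2 * Suc q) / (fact k * c0)" for q
  proof -
    let ?m = "Suc q"
    have "X q = (-1) ^ (?m + 1) / fact (k + 2 * ?m) * (2 * \<sigma>) ^ (2 * ?m) * Q (k + 1) (2 * ?m) 2 * Z r (k + 2 * ?m + 1) L"
      unfolding X_def Let_def r_def[symmetric] inner_eq ..
    moreover have "T (k + 2 * ?m) = 2 ^ k * (fact k * ((-4) ^ ?m * Q (k + 1) (2 * ?m) 2) / fact (k + 2 * ?m))
        * (2 * (\<sigma> ^ Suc (k + 2 * ?m) * ln 2 ^ r * Z r (k + 2 * ?m + 1) L))"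
      unfolding T_def e_Q W_Z[OF sp] L_def by simp
    ultimately have "X q * (fact k * c0) = - T (k + 2 * ?m)"
      unfolding c0_def using X_alg[of "fact (k + 2 * ?m)" ?m \<sigma> "Q (k + 1) (2 * ?m) 2" "Z r (k + 2 * ?m + 1) L" "fact k" k "ln 2 ^ r"]
      by (simp add: mult.assoc)
    then show ?thesis using c0nz by (simp add: field_simps)
  qed
  have Yeq: "(\<Sum>l=0..j-k-1. real ((j - k - 1) choose l) / (ln 2) ^ l *
             (\<Sum>p=0..l. (-1) ^ p * falling_fact (real l) p * L ^ (l - p)
                            / real (k + 1) ^ (p + 1))) * c0 = T k"
  proof -
    have ek: "e k k = 1" using e_Q[of k 0] Q0 by simp
    show ?thesis
      unfolding r_def[symmetric] inner_eq T_def ek W_Z[OF sp] c0_def L_def[symmetric] by (simp add: algebra_simps)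
  qed
  have sX: "X sums (- (I - T k) / (fact k * c0))"
    unfolding Xeq using sums_divide[OF sums_minus[OF sT3], of "fact k * c0"] by simp
  show ?thesis
    unfolding c0 X_def[symmetric] sums_unique[OF sX, symmetric] Ls
    using Yeq c0nz by (simp add: field_simps)
qed



end
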